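(* Let $\Omega=\{1,\dots,n\}$ be a finite ground set, let $\hat f:2^\Omega\to\mathbb{R}$ be any set function, let $b>0$ be a budget and let $c_i$, $i\in\Omega$, be costs with $0<c_i\le b$ for all $i$. Run the following procedure: set $X_1\leftarrow\emptyset$ and $k\leftarrow\arg\min_{i\in\Omega}\hat f(\{i\})/c_i$; while $c_k\le b-\sum_{i\in X_1}c_i$, set $X_1\leftarrow X_1\cup\{k\}$ and $k\leftarrow\arg\min_{i\in\Omega\setminus X_1}\hat f(X_1\cup\{i\})/c_i$ (ties broken arbitrarily); when the loop stops, set $a\leftarrow k$. Let $X_{\mathrm{greedy1}}=X_1$ and $X_{\mathrm{greedy1a}}=X_1\cup\{a\}$, and define $$\beta=1-\prod_{i\in X_{\mathrm{greedy1}}}\Big(1-\frac{c_i}{b}\Big),\qquad \beta_a=1-\prod_{i\in X_{\mathrm{greedy1a}}}\Big(1-\frac{c_i}{b}\Big).$$ Let $\gamma\in(0,1]$ be such that $\sum_{i\in X_{\mathrm{greedy1}}}c_i=\gamma b$. Then $\beta\in(1-e^{-\gamma},1]$ and $\beta_a\in(1-\gamma e^{-\gamma},1]$.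
   Context: This is the first phase of a cost-effective forward greedy selection for budget-constrained minimization of $\hat f$ over sets $X$ with $\sum_{i\in X}c_i\le b$; $\gamma$ is the fraction of the budget used by the set $X_1$ produced by that phase, and $a$ is the element that the greedy rule would add next but which no longer fits the remaining budget. *)

theory Defs
  imports Complex_Main
begin

text \<open>The list xs records the elements added to X_1 in order; a is the element
  the greedy rule selects next but which no longer fits. Ties are broken
  arbitrarily (any argmin may be chosen).\<close>

definition greedy_phase1 ::
  "'a set \<Rightarrow> ('a set \<Rightarrow> real) \<Rightarrow> ('a \<Rightarrow> real) \<Rightarrow> real \<Rightarrow> 'a list \<Rightarrow> 'a \<Rightarrow> bool" where
  "greedy_phase1 \<Omega> f c b xs a \<longleftrightarrow>
     (\<forall>j < length xs.
        is_arg_min (\<lambda>i. f (insert i (set (take j xs))) / c i)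
                   (\<lambda>i. i \<in> \<Omega> - set (take j xs)) (xs ! j)
      \<and> c (xs ! j) \<le> b - sum c (set (take j xs)))
   \<and> is_arg_min (\<lambda>i. f (insert i (set xs)) / c i) (\<lambda>i. i \<in> \<Omega> - set xs) a
   \<and> c a > b - sum c (set xs)"

end

theory Submission
  imports Defs
begin

lemma prod_exp_bound:
  fixes c :: "nat \<Rightarrow> real" and b :: real
  assumes "finite S" "S \<noteq> {}" "\<forall>i\<in>S. 0 < c i \<and> c i \<le> b" "b > 0"
  shows "(\<Prod>i\<in>S. 1 - c i / b) < exp (- (sum c S / b))"
  using assms
proof (induction S rule: finite_ne_induct)
  case (singleton x)
  then show ?case using exp_minus_greater[of "c x / b"] by simp
next
  case (insert x F)
  have x: "0 < c x" "c x \<le> b" using insert by auto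
  have h1: "0 \<le> 1 - c x / b" using x insert.prems by simp
  have h2: "1 - c x / b \<le> exp (- (c x / b))" using exp_minus_ge by blast
  have P0: "0 \<le> (\<Prod>i\<in>F. 1 - c i / b)"
    using insert.prems insert.hyps by (intro prod_nonneg) auto
  have IH: "(\<Prod>i\<in>F. 1 - c i / b) < exp (- (sum c F / b))" using insert by auto
  have "(\<Prod>i\<in>insert x F. 1 - c i / b) = (1 - c x / b) * (\<Prod>i\<in>F. 1 - c i / b)"
    using insert.hyps by simp
  also have "\<dots> \<le> exp (- (c x / b)) * (\<Prod>i\<in>F. 1 - c i / b)"
    using h2 P0 by (rule mult_right_mono)
  also have "\<dots> < exp (- (c x / b)) * exp (- (sum c F / b))"
    using IH by simp
  also have "\<dots> = exp (- (sum c (insert x F) / b))"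
    using insert.hyps by (simp add: exp_add[symmetric] add_divide_distrib)
  finally show ?case .
qed

theorem proposition3:
  fixes n :: nat and f :: "nat set \<Rightarrow> real" and c :: "nat \<Rightarrow> real"
    and b \<gamma> :: real and xs :: "nat list" and a :: nat
  assumes "b > 0"
    and "\<forall>i\<in>{1..n}. 0 < c i \<and> c i \<le> b"
    and "greedy_phase1 {1..n} f c b xs a"
    and "\<gamma> \<in> {0<..1}"
    and "sum c (set xs) = \<gamma> * b"
  shows "1 - (\<Prod>i\<in>set xs. 1 - c i / b) \<in> {1 - exp (- \<gamma>)<..1}
       \<and> 1 - (\<Prod>i\<in>insert a (set xs). 1 - c i / b) \<in> {1 - \<gamma> * exp (- \<gamma>)<..1}"
proof -
  have G: "\<forall>j < length xs. is_arg_min (\<lambda>i. f (insert i (set (take j xs))) / c i)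
                   (\<lambda>i. i \<in> {1..n} - set (take j xs)) (xs ! j)"
    and A: "is_arg_min (\<lambda>i. f (insert i (set xs)) / c i) (\<lambda>i. i \<in> {1..n} - set xs) a"
    and ca: "c a > b - sum c (set xs)"
    using assms(3) unfolding greedy_phase1_def by auto
  have sub: "set xs \<subseteq> {1..n}"
  proof
    fix x assume "x \<in> set xs"
    then obtain j where j: "j < length xs" "xs ! j = x" by (auto simp: in_set_conv_nth)
    then show "x \<in> {1..n}" using G unfolding is_arg_min_def by auto
  qed
  have aS: "a \<in> {1..n}" "a \<notin> set xs" using A unfolding is_arg_min_def by auto
  have g: "0 < \<gamma>" "\<gamma> \<le> 1" using assms(4) by auto
  have ne: "set xs \<noteq> {}"
  proof
    assume "set xs = {}"
    then have "\<gamma> * b = 0" using assms(5) by simp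
    then show False using g assms(1) by simp
  qed
  have cs: "\<forall>i\<in>set xs. 0 < c i \<and> c i \<le> b" using sub assms(2) by auto
  define P where "P = (\<Prod>i\<in>set xs. 1 - c i / b)"
  have P0: "0 \<le> P" unfolding P_def using cs assms(1) by (intro prod_nonneg) auto
  have "sum c (set xs) / b = \<gamma>" using assms(5) assms(1) by simp
  then have Plt: "P < exp (- \<gamma>)" unfolding P_def
    using prod_exp_bound[OF _ ne cs assms(1)] by simp
  have ca2: "0 < c a" "c a \<le> b" using aS assms(2) by auto
  define t where "t = 1 - c a / b"
  have t0: "0 \<le> t" unfolding t_def using ca2 assms(1) by simp
  have "c a / b > 1 - \<gamma>" using ca assms(5) assms(1)
    by (simp add: field_simps)
  then have tg: "t < \<gamma>" unfolding t_def by simp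
  have Pa: "(\<Prod>i\<in>insert a (set xs). 1 - c i / b) = t * P"
    unfolding P_def t_def using aS by simp
  have "t * P \<le> t * exp (- \<gamma>)" using Plt t0 by (intro mult_left_mono) auto
  also have "\<dots> < \<gamma> * exp (- \<gamma>)" using tg by simp
  finally have "t * P < \<gamma> * exp (- \<gamma>)" .
  moreover have "0 \<le> t * P" using t0 P0 by simp
  ultimately show ?thesis using Plt P0 unfolding Pa P_def[symmetric] by auto
qed

end
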